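(* Let $s,r\ge 0$ be real numbers, not both zero, and put $\gamma_1(s)=(0,2s,0)$, $\gamma_2(r)=(2r,0,0)\in\mathbb{R}^3$ and $D=\sqrt{r^2+s^2}$. Let $x=(x_1,x_2,x_3)$ and $y=(y_1,y_2,y_3)$ be points of $\mathbb{R}^3$ satisfying \[ \sqrt{(x_1-2r)^2+x_2^2+x_3^2}+\sqrt{x_1^2+(x_2-2s)^2+x_3^2}=\sqrt{(y_1-2r)^2+y_2^2+y_3^2}+\sqrt{y_1^2+(y_2-2s)^2+y_3^2}, \] \[ \frac{x_1-2r}{\sqrt{(x_1-2r)^2+x_2^2+x_3^2}}=\frac{y_1-2r}{\sqrt{(y_1-2r)^2+y_2^2+y_3^2}},\qquad \frac{x_2-2s}{\sqrt{x_1^2+(x_2-2s)^2+x_3^2}}=\frac{y_2-2s}{\sqrt{y_1^2+(y_2-2s)^2+y_3^2}}. \] Define $\rho\ge 0$ by $\cosh\rho=\dfrac{|x-\gamma_1(s)|+|x-\gamma_2(r)|}{2D}$ (the prolate spheroidal "radial" coordinate of $x$ with respect to the foci $\gamma_1(s),\gamma_2(r)$; by the first equation it is the same for $y$). If $\rho>\ln 6$, then either $x=y$ or $x=(y_1,y_2,-y_3)$.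
   Context: This is the setting of multistatic SAR with transmitters on the line $\gamma_1$ and receivers on the perpendicular line $\gamma_2$ in the plane $x_3=0$. The three equations express that the scene points $x$ and $y$ give the same travel time $|\gamma_1(s)-\cdot|+|\cdot-\gamma_2(r)|$ and the same derivatives of this travel time with respect to $s$ and $r$, i.e. they are the conditions for two points of the canonical relation of the forward scattering operator (phase $\omega(t-(|\gamma_1(s)-x|+|x-\gamma_2(r)|)/c_0)$) to project to the same point of the data cotangent space. The conclusion says the only possible artefact is the mirror image across the plane $x_3=0$. *)

theory Defs
  imports Complex_Main
begin

end

theory Submission
  imports Defs
begin

lemma key_fact:
  fixes p q A :: real
  assumes "A = sqrt (p^2 + q)" "q \<ge> 0"
  shows "p = A * (p / A)" "\<bar>p / A\<bar> \<le> 1" "A^2 = p^2 + q" "A \<ge> 0"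
proof -
  have A2: "A^2 = p^2 + q" using assms by simp
  have A0: "A \<ge> 0" using assms by simp
  show "A^2 = p^2 + q" "A \<ge> 0" by fact+
  show "p = A * (p / A)"
  proof (cases "A = 0")
    case True
    then have "p^2 + q = 0" using A2 by simp
    then have "p^2 = 0" using assms(2) by (smt (verit) zero_le_power2)
    then have "p = 0" by simp
    then show ?thesis by simp
  qed simp
  have "\<bar>p\<bar> \<le> A"
  proof -
    have "\<bar>p\<bar> = sqrt (p^2)" by simp
    also have "\<dots> \<le> sqrt (p^2 + q)" by (intro real_sqrt_le_mono) (simp add: assms(2))
    finally show ?thesis using assms(1) by simp
  qed
  then show "\<bar>p / A\<bar> \<le> 1"
  proof (cases "A = 0")
    case False
    then have Ap: "A > 0" using A0 by simp
    have "\<bar>p / A\<bar> = \<bar>p\<bar> / A" using Ap by (simp add: abs_divide)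
    also have "\<dots> \<le> 1" using Ap \<open>\<bar>p\<bar> \<le> A\<close> by (simp add: divide_le_eq_1_pos)
    finally show ?thesis .
  qed simp
qed

theorem mainTheorem1:
  fixes s r x1 x2 x3 y1 y2 y3 \<rho> :: real
  assumes "s \<ge> 0" and "r \<ge> 0" and "\<not> (s = 0 \<and> r = 0)"
    and eq1: "sqrt ((x1 - 2*r)^2 + x2^2 + x3^2) + sqrt (x1^2 + (x2 - 2*s)^2 + x3^2)
            = sqrt ((y1 - 2*r)^2 + y2^2 + y3^2) + sqrt (y1^2 + (y2 - 2*s)^2 + y3^2)"
    and eq2: "(x1 - 2*r) / sqrt ((x1 - 2*r)^2 + x2^2 + x3^2)
            = (y1 - 2*r) / sqrt ((y1 - 2*r)^2 + y2^2 + y3^2)"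
    and eq3: "(x2 - 2*s) / sqrt (x1^2 + (x2 - 2*s)^2 + x3^2)
            = (y2 - 2*s) / sqrt (y1^2 + (y2 - 2*s)^2 + y3^2)"
    and rho_nonneg: "\<rho> \<ge> 0"
    and rho_def: "cosh \<rho> = (sqrt (x1^2 + (x2 - 2*s)^2 + x3^2) + sqrt ((x1 - 2*r)^2 + x2^2 + x3^2))
                              / (2 * sqrt (r^2 + s^2))"
    and rho_big: "\<rho> > ln 6"
  shows "(x1 = y1 \<and> x2 = y2 \<and> x3 = y3) \<or> (x1 = y1 \<and> x2 = y2 \<and> x3 = - y3)"
proof -
  define A where "A = sqrt ((x1 - 2*r)^2 + x2^2 + x3^2)"
  define B where "B = sqrt (x1^2 + (x2 - 2*s)^2 + x3^2)"
  define A' where "A' = sqrt ((y1 - 2*r)^2 + y2^2 + y3^2)"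
  define B' where "B' = sqrt (y1^2 + (y2 - 2*s)^2 + y3^2)"
  define u where "u = (x1 - 2*r) / A"
  define v where "v = (x2 - 2*s) / B"
  define D where "D = sqrt (r^2 + s^2)"
  have Ad: "A = sqrt ((x1 - 2*r)^2 + (x2^2 + x3^2))" unfolding A_def by (simp only: add.assoc)
  have A'd: "A' = sqrt ((y1 - 2*r)^2 + (y2^2 + y3^2))" unfolding A'_def by (simp only: add.assoc)
  have ax: "x1^2 + (x2 - 2*s)^2 + x3^2 = (x2 - 2*s)^2 + (x1^2 + x3^2)" by linarith
  have ay: "y1^2 + (y2 - 2*s)^2 + y3^2 = (y2 - 2*s)^2 + (y1^2 + y3^2)" by linarith
  have Bd: "B = sqrt ((x2 - 2*s)^2 + (x1^2 + x3^2))" unfolding B_def ax ..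
  have B'd: "B' = sqrt ((y2 - 2*s)^2 + (y1^2 + y3^2))" unfolding B'_def ay ..
  have hA: "x1 - 2*r = A * u" "\<bar>u\<bar> \<le> 1" "A^2 = (x1 - 2*r)^2 + (x2^2 + x3^2)" "A \<ge> 0"
    using key_fact[OF Ad] unfolding u_def by auto
  have hB: "x2 - 2*s = B * v" "\<bar>v\<bar> \<le> 1" "B^2 = (x2 - 2*s)^2 + (x1^2 + x3^2)" "B \<ge> 0"
    using key_fact[OF Bd] unfolding v_def by auto
  have uu: "u = (y1 - 2*r) / A'" using eq2 unfolding u_def A_def A'_def .
  have vv: "v = (y2 - 2*s) / B'" using eq3 unfolding v_def B_def B'_def .
  have hA': "y1 - 2*r = A' * u" "A'^2 = (y1 - 2*r)^2 + (y2^2 + y3^2)"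
    using key_fact[OF A'd] unfolding uu by auto
  have hB': "y2 - 2*s = B' * v" "B'^2 = (y2 - 2*s)^2 + (y1^2 + y3^2)"
    using key_fact[OF B'd] unfolding vv by auto
  have L: "A + B = A' + B'" using eq1 unfolding A_def B_def A'_def B'_def .
  have "r^2 + s^2 > 0" using assms(1-3) by (smt (verit) zero_le_power2 power2_less_eq_zero_iff)
  then have D0: "D > 0" unfolding D_def by simp
  have "exp \<rho> > exp (ln 6)" using rho_big by (rule exp_less_mono)
  then have "exp \<rho> > 6" by simp
  moreover have "exp (- \<rho>) > 0" by simp
  moreover have "2 * cosh \<rho> = exp \<rho> + exp (- \<rho>)" by (simp add: cosh_field_def)
  ultimately have "cosh \<rho> > 3" by linarith
  moreover have "cosh \<rho> = (A + B) / (2 * D)" using rho_def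
    unfolding A_def[symmetric] B_def[symmetric] D_def[symmetric] by (simp add: add.commute)
  ultimately have L6: "A + B > 6 * D" using D0 by (simp add: field_simps)
  have D2: "D^2 = r^2 + s^2" unfolding D_def by simp
  have "(r + s)^2 \<le> (2*D)^2"
  proof -
    have "0 \<le> (r - s)^2" by simp
    then have "(r + s)^2 \<le> 2*(r^2+s^2)" by (simp add: power2_eq_square algebra_simps)
    also have "\<dots> \<le> 4*(r^2+s^2)" by simp
    also have "\<dots> = (2*D)^2" using D2 by (simp add: power_mult_distrib)
    finally show ?thesis .
  qed
  then have "r + s \<le> 2 * D" by (rule power2_le_imp_le) (use D0 in simp)
  then have big: "2*(A+B) + 4*r*u + 4*s*v > 0"
  proof -
    have "-1 \<le> u" using hA(2) by linarith
    then have h1: "r*(-1) \<le> r*u" using assms(2) by (rule mult_left_mono)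
    have "-1 \<le> v" using hB(2) by linarith
    then have h2: "s*(-1) \<le> s*v" using assms(1) by (rule mult_left_mono)
    have h3: "r*u \<ge> -r" "s*v \<ge> -s" using h1 h2 by simp_all
    have "2*(A+B) + 4*(r*u) + 4*(s*v) > 0" using h3 L6 \<open>r + s \<le> 2 * D\<close> D0 by argo
    then show ?thesis by (simp add: mult.assoc)
  qed
  have e1: "A^2 - B^2 = -4*r^2 - 4*r*A*u + 4*s^2 + 4*s*B*v"
  proof -
    have e1: "x1 = 2*r + A*u" using hA(1) by argo
    have e2: "x2 = 2*s + B*v" using hB(1) by argo
    note ee = e1 e2
    have "A^2 - B^2 = (x1 - 2*r)^2 - x1^2 + x2^2 - (x2 - 2*s)^2" using hA(3) hB(3) by simp
    also have "\<dots> = -4*r*x1 + 4*r^2 + 4*s*x2 - 4*s^2" by (simp add: power2_eq_square algebra_simps)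
    also have "\<dots> = -4*r*(2*r + A*u) + 4*r^2 + 4*s*(2*s + B*v) - 4*s^2" using ee by simp
    also have "\<dots> = -4*r^2 - 4*r*A*u + 4*s^2 + 4*s*B*v" by (simp add: power2_eq_square algebra_simps)
    finally show ?thesis .
  qed
  have e2: "A'^2 - B'^2 = -4*r^2 - 4*r*A'*u + 4*s^2 + 4*s*B'*v"
  proof -
    have e1: "y1 = 2*r + A'*u" using hA'(1) by argo
    have e2: "y2 = 2*s + B'*v" using hB'(1) by argo
    note ee = e1 e2
    have "A'^2 - B'^2 = (y1 - 2*r)^2 - y1^2 + y2^2 - (y2 - 2*s)^2" using hA'(2) hB'(2) by simp
    also have "\<dots> = -4*r*y1 + 4*r^2 + 4*s*y2 - 4*s^2" by (simp add: power2_eq_square algebra_simps)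
    also have "\<dots> = -4*r*(2*r + A'*u) + 4*r^2 + 4*s*(2*s + B'*v) - 4*s^2" using ee by simp
    also have "\<dots> = -4*r^2 - 4*r*A'*u + 4*s^2 + 4*s*B'*v" by (simp add: power2_eq_square algebra_simps)
    finally show ?thesis .
  qed
  have "(A - A') * (2*(A+B) + 4*r*u + 4*s*v) = 0"
  proof -
    have bb: "B' = A + B - A'" using L by simp
    have "A^2 - B^2 = (A - B) * (A + B)" by (simp add: power2_eq_square algebra_simps)
    moreover have "A'^2 - B'^2 = (A' - B') * (A + B)" using L by (simp add: power2_eq_square algebra_simps)
    ultimately have "(A - B) * (A + B) - (A' - B') * (A + B) = -4*r*u*(A - A') + 4*s*v*(B - B')"
      using e1 e2 by (simp add: algebra_simps)
    then have "(2*(A - A')) * (A + B) = -4*r*u*(A - A') - 4*s*v*(A - A')"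
      using bb by (simp add: algebra_simps)
    then show ?thesis by (simp add: algebra_simps)
  qed
  then have AA: "A = A'" using big by simp
  then have BB: "B = B'" using L by simp
  have X1: "x1 = y1" using hA(1) hA'(1) AA by simp
  have X2: "x2 = y2" using hB(1) hB'(1) BB by simp
  have "x3^2 = y3^2" using hA(3) hA'(2) AA X1 X2 by simp
  then have "x3 = y3 \<or> x3 = - y3" by (simp add: power2_eq_iff)
  then show ?thesis using X1 X2 by blast
qed

end
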